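(* Let $\beta\in(0,\tfrac12)$ and let $\lambda\in(0,1)$ be a principal eigenvalue of $\Delta_\beta$ with a non-negative eigenfunction $u$. Then the function $\bar u(x)=m^{-|x|}\sum_{y\in\mathbb{T}_m:\,|y|=|x|}u(y)$ is a strictly positive eigenfunction associated with $\lambda$ (in particular $\lim_{x\to y}\bar u(x)=0$ for every branch $y$), it is constant on each level, and it is strictly decreasing with respect to the level.
   Context: Tree: for an integer $m\ge2$, $\mathbb{T}_m$ has vertices the root $\emptyset$ and all finite sequences $(\emptyset,a_1,\dots,a_k)$, $a_i\in\{0,\dots,m-1\}$; $|x|$ is the level, successors of $x$ are $(x,i)$, $\hat x$ is the immediate predecessor of $x\ne\emptyset$. A branch is an infinite sequence $(x_n)_{n\ge0}$ with $x_0=\emptyset$, $x_{n+1}$ a successor of $x_n$; $\lim_{x\to y}u(x)=\lim_n u(x_n)$ for a branch $y=(x_n)$. Operator: $p_\beta=\beta/(1-\beta)$ for $\beta\in(0,1)$. $\Delta_\beta u(\emptyset)=\frac1m\sum_{i=0}^{m-1}u(\emptyset,i)-u(\emptyset)$ and, for $x\ne\emptyset$, $\Delta_\beta u(x)=\big(\beta u(\hat x)+\frac{1-\beta}{m}\sum_{i=0}^{m-1}u(x,i)-u(x)\big)p_\beta^{-|x|}$. Eigenvalues: $\lambda\in\mathbb{R}$ is an eigenvalue of $\Delta_\beta$ if there is a bounded $u\not\equiv0$ with $-\Delta_\beta u=\lambda u$ on $\mathbb{T}_m$ and $\lim_{x\to y}u(x)=0$ for every branch $y$ ($u$ is an eigenfunction);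 an eigenvalue $\lambda>0$ is principal if it has a non-negative eigenfunction. *)

theory Defs
  imports Complex_Main
begin

text \<open>The root is the empty list, the successors of x are x @ [i] (i < m),
  the predecessor of x is butlast x, the level |x| is length x.\<close>

definition tree :: "nat \<Rightarrow> nat list set" where
  "tree m = {x. \<forall>a\<in>set x. a < m}"

definition pbeta :: "real \<Rightarrow> real" where
  "pbeta \<beta> = \<beta> / (1 - \<beta>)"

definition Delta :: "nat \<Rightarrow> real \<Rightarrow> (nat list \<Rightarrow> real) \<Rightarrow> nat list \<Rightarrow> real" where
  "Delta m \<beta> u x =
     (if x = [] then (1 / real m) * (\<Sum>i<m. u [i]) - u []
      else (\<beta> * u (butlast x) + ((1 - \<beta>) / real m) * (\<Sum>i<m. u (x @ [i])) - u x)
           * (inverse (pbeta \<beta>)) ^ length x)"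

definition branch :: "nat \<Rightarrow> (nat \<Rightarrow> nat list) \<Rightarrow> bool" where
  "branch m X \<longleftrightarrow> X 0 = [] \<and> (\<forall>n. \<exists>i<m. X (Suc n) = X n @ [i])"

definition eigenfunction :: "nat \<Rightarrow> real \<Rightarrow> real \<Rightarrow> (nat list \<Rightarrow> real) \<Rightarrow> bool" where
  "eigenfunction m \<beta> lam u \<longleftrightarrow>
     (\<exists>C. \<forall>x\<in>tree m. \<bar>u x\<bar> \<le> C) \<and>
     (\<exists>x\<in>tree m. u x \<noteq> 0) \<and>
     (\<forall>x\<in>tree m. - Delta m \<beta> u x = lam * u x) \<and>
     (\<forall>X. branch m X \<longrightarrow> (\<lambda>n. u (X n)) \<longlonglongrightarrow> 0)"

definition eigenvalue :: "nat \<Rightarrow> real \<Rightarrow> real \<Rightarrow> bool" where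
  "eigenvalue m \<beta> lam \<longleftrightarrow> (\<exists>u. eigenfunction m \<beta> lam u)"

definition principal_eigenvalue :: "nat \<Rightarrow> real \<Rightarrow> real \<Rightarrow> bool" where
  "principal_eigenvalue m \<beta> lam \<longleftrightarrow>
     lam > 0 \<and> (\<exists>u. eigenfunction m \<beta> lam u \<and> (\<forall>x\<in>tree m. u x \<ge> 0))"

definition level_avg :: "nat \<Rightarrow> (nat list \<Rightarrow> real) \<Rightarrow> nat list \<Rightarrow> real" where
  "level_avg m u x = (1 / real m) ^ length x * (\<Sum>y\<in>{y\<in>tree m. length y = length x}. u y)"

end

theory Submission
  imports Defs
begin

lemma lvl_eq: "{y\<in>tree m. length y = n} = {xs. set xs \<subseteq> {..<m} \<and> length xs = n}"
  by (auto simp: tree_def)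

lemma lvl_finite: "finite {y\<in>tree m. length y = n}"
  unfolding lvl_eq by (rule finite_lists_length_eq) simp

lemma lvl_card: "card {y\<in>tree m. length y = n} = m ^ n"
  unfolding lvl_eq by (subst card_lists_length_eq) simp_all

lemma lvl_Suc: "{y\<in>tree m. length y = Suc n} =
   (\<lambda>(x,i). x @ [i]) ` ({y\<in>tree m. length y = n} \<times> {..<m})"
proof (rule set_eqI, rule iffI)
  fix y assume y: "y \<in> {y\<in>tree m. length y = Suc n}"
  then have "y \<noteq> []" by auto
  then have e: "y = butlast y @ [last y]" by simp
  have "butlast y \<in> tree m" "last y < m" using y \<open>y \<noteq> []\<close>
    by (auto simp: tree_def in_set_butlastD)
  then show "y \<in> (\<lambda>(x,i). x @ [i]) ` ({y\<in>tree m. length y = n} \<times> {..<m})"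
    using y e by (intro image_eqI[of _ _ "(butlast y, last y)"]) auto
qed (auto simp: tree_def)

lemma lvl_sum_Suc: "(\<Sum>y\<in>{y\<in>tree m. length y = Suc n}. f y) =
   (\<Sum>x\<in>{y\<in>tree m. length y = n}. \<Sum>i<m. f (x @ [i]))"
proof -
  have inj: "inj_on (\<lambda>(x,i). x @ [i]) ({y\<in>tree m. length y = n} \<times> {..<m})"
    by (auto simp: inj_on_def)
  show ?thesis
    unfolding lvl_Suc sum.reindex[OF inj]
    by (simp add: sum.cartesian_product split_def)
qed

lemma lvl_sum_butlast: "(\<Sum>y\<in>{y\<in>tree m. length y = Suc n}. (f (butlast y)::real)) =
   real m * (\<Sum>x\<in>{y\<in>tree m. length y = n}. f x)"
  unfolding lvl_sum_Suc by (simp add: sum_distrib_left)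

lemma lvl_sum_children: "(\<Sum>x\<in>{y\<in>tree m. length y = n}. \<Sum>i<m. (f (x @ [i])::real)) =
   (\<Sum>y\<in>{y\<in>tree m. length y = Suc n}. f y)"
  unfolding lvl_sum_Suc ..

lemma lvl_zero: "{y\<in>tree m. length y = 0} = {[]}"
  by (auto simp: tree_def)

primrec greedy :: "nat \<Rightarrow> (nat list \<Rightarrow> real) \<Rightarrow> nat \<Rightarrow> nat list" where
  "greedy m u 0 = []"
| "greedy m u (Suc n) = greedy m u n @
     [SOME i. i < m \<and> (\<forall>j<m. u (greedy m u n @ [j]) \<le> u (greedy m u n @ [i]))]"

lemma argmax_ex: "0 < (m::nat) \<Longrightarrow> \<exists>i. i < m \<and> (\<forall>j<m. (f j::real) \<le> f i)"
proof -
  assume "0 < m"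
  then have ne: "f ` {..<m} \<noteq> {}" by auto
  have "Max (f ` {..<m}) \<in> f ` {..<m}" by (rule Max_in) (use ne in auto)
  then obtain i where "i < m" "f i = Max (f ` {..<m})" by auto
  then show ?thesis by (intro exI[of _ i]) auto
qed

lemma greedy_prop:
  assumes "0 < m"
  shows "greedy m u (Suc n) = greedy m u n @ [last (greedy m u (Suc n))]"
    and "last (greedy m u (Suc n)) < m"
    and "\<forall>j<m. u (greedy m u n @ [j]) \<le> u (greedy m u (Suc n))"
proof -
  define x where "x = greedy m u n"
  have ex: "\<exists>i. i < m \<and> (\<forall>j<m. u (x @ [j]) \<le> u (x @ [i]))"
    using argmax_ex[OF assms, of "\<lambda>j. u (x @ [j])"] by simp
  have "(SOME i. i < m \<and> (\<forall>j<m. u (x @ [j]) \<le> u (x @ [i]))) < m \<and>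
     (\<forall>j<m. u (x @ [j]) \<le> u (x @ [SOME i. i < m \<and> (\<forall>j<m. u (x @ [j]) \<le> u (x @ [i]))]))"
    by (rule someI_ex[OF ex])
  then show "greedy m u (Suc n) = greedy m u n @ [last (greedy m u (Suc n))]"
    and "last (greedy m u (Suc n)) < m"
    and "\<forall>j<m. u (greedy m u n @ [j]) \<le> u (greedy m u (Suc n))"
    by (simp_all add: x_def)
qed

lemma greedy_branch: "0 < m \<Longrightarrow> branch m (greedy m u)"
  unfolding branch_def
proof (intro conjI allI)
  assume m: "0 < m"
  show "greedy m u 0 = []" by simp
  fix n
  show "\<exists>i<m. greedy m u (Suc n) = greedy m u n @ [i]"
    using greedy_prop(1,2)[OF m, of u n] by blast
qed

lemma greedy_tree: "0 < m \<Longrightarrow> greedy m u n \<in> tree m \<and> length (greedy m u n) = n"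
proof (induction n)
  case 0 then show ?case by (simp add: tree_def)
next
  case (Suc n)
  have e: "greedy m u (Suc n) = greedy m u n @ [last (greedy m u (Suc n))]"
    and l: "last (greedy m u (Suc n)) < m"
    using greedy_prop(1,2)[OF Suc.prems, of u n] by blast+
  have "greedy m u n @ [last (greedy m u (Suc n))] \<in> tree m \<and>
     length (greedy m u n @ [last (greedy m u (Suc n))]) = Suc n"
    using Suc l by (auto simp: tree_def)
  then show ?case using e by metis
qed

theorem lemma5p4:
  fixes m :: nat and \<beta> lam :: real and u :: "nat list \<Rightarrow> real"
  assumes "m \<ge> 2"
    and "0 < \<beta>" and "\<beta> < 1/2"
    and "0 < lam" and "lam < 1"
    and "principal_eigenvalue m \<beta> lam"
    and "eigenfunction m \<beta> lam u"
    and "\<forall>x\<in>tree m. u x \<ge> 0"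
  shows "eigenfunction m \<beta> lam (level_avg m u)
    \<and> (\<forall>x\<in>tree m. level_avg m u x > 0)
    \<and> (\<forall>x\<in>tree m. \<forall>y\<in>tree m. length x = length y \<longrightarrow> level_avg m u x = level_avg m u y)
    \<and> (\<forall>x\<in>tree m. \<forall>y\<in>tree m. length x < length y \<longrightarrow> level_avg m u x > level_avg m u y)"
proof -
  have m0: "0 < m" using assms(1) by simp
  have mr: "real m > 0" using m0 by simp
  obtain C where C: "\<forall>x\<in>tree m. \<bar>u x\<bar> \<le> C"
    and nz: "\<exists>x\<in>tree m. u x \<noteq> 0"
    and eq: "\<forall>x\<in>tree m. - Delta m \<beta> u x = lam * u x"
    and br: "\<forall>X. branch m X \<longrightarrow> (\<lambda>n. u (X n)) \<longlonglongrightarrow> 0"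
    using assms(7) unfolding eigenfunction_def by blast
  have u0: "\<And>x. x \<in> tree m \<Longrightarrow> u x \<ge> 0" using assms(8) by blast
  define p where "p = pbeta \<beta>"
  have p0: "p > 0" using assms(2,3) by (simp add: p_def pbeta_def)
  have p1: "p < 1" using assms(2,3) by (simp add: p_def pbeta_def)
  define S where "S n = (\<Sum>y\<in>{y\<in>tree m. length y = n}. u y)" for n
  define V where "V n = (1 / real m) ^ n * S n" for n
  have hav: "\<And>x. level_avg m u x = V (length x)"
    by (simp add: level_avg_def V_def S_def)
  have S0: "S 0 = u []" unfolding S_def lvl_zero by simp
  have S1: "S 1 = (\<Sum>i<m. u [i])"
    using lvl_sum_Suc[where m=m and n=0 and f=u] unfolding S_def lvl_zero One_nat_def by simp
  have tree_app: "\<And>x i. x \<in> tree m \<Longrightarrow> i < m \<Longrightarrow> x @ [i] \<in> tree m"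
    by (auto simp: tree_def)
  have loc: "\<beta> * u (butlast x) + ((1 - \<beta>) / real m) * (\<Sum>i<m. u (x @ [i])) - u x
       = - lam * p ^ length x * u x" if "x \<in> tree m" "x \<noteq> []" for x
  proof -
    define E where "E = \<beta> * u (butlast x) + ((1 - \<beta>) / real m) * (\<Sum>i<m. u (x @ [i])) - u x"
    have "- (E * (inverse p) ^ length x) = lam * u x"
    proof -
      have "- Delta m \<beta> u x = lam * u x" using eq that by blast
      moreover have "Delta m \<beta> u x = E * (inverse p) ^ length x"
        unfolding Delta_def E_def p_def using that(2) by simp
      ultimately show ?thesis by simp
    qed
    then have "- (E * (inverse p) ^ length x) * p ^ length x = lam * u x * p ^ length x" by simp
    moreover have "(inverse p) ^ length x * p ^ length x = 1"
      using p0 by (simp add: power_mult_distrib[symmetric])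
    ultimately have "- E = lam * u x * p ^ length x"
      by (metis minus_mult_left mult.assoc mult.right_neutral)
    then show ?thesis unfolding E_def by (simp add: algebra_simps)
  qed
  have root: "(1 / real m) * (\<Sum>i<m. u [i]) - u [] = - lam * u []"
  proof -
    have "[] \<in> tree m" by (simp add: tree_def)
    then have "- Delta m \<beta> u [] = lam * u []" using eq by blast
    then show ?thesis unfolding Delta_def by simp
  qed
  have RS: "\<beta> * real m * S n + ((1 - \<beta>) / real m) * S (Suc (Suc n)) - S (Suc n)
      = - lam * p ^ Suc n * S (Suc n)" for n
  proof -
    have "(\<Sum>y\<in>{y\<in>tree m. length y = Suc n}.
        \<beta> * u (butlast y) + ((1 - \<beta>) / real m) * (\<Sum>i<m. u (y @ [i])) - u y)
      = (\<Sum>y\<in>{y\<in>tree m. length y = Suc n}. - lam * p ^ Suc n * u y)"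
    proof (rule sum.cong)
      fix x assume x: "x \<in> {y\<in>tree m. length y = Suc n}"
      then have "x \<noteq> []" by auto
      with x loc[of x] show "\<beta> * u (butlast x) + ((1 - \<beta>) / real m) * (\<Sum>i<m. u (x @ [i])) - u x
        = - lam * p ^ Suc n * u x" by simp
    qed simp
    moreover have "(\<Sum>y\<in>{y\<in>tree m. length y = Suc n}.
        \<beta> * u (butlast y) + ((1 - \<beta>) / real m) * (\<Sum>i<m. u (y @ [i])) - u y)
      = \<beta> * (real m * S n) + ((1 - \<beta>) / real m) * S (Suc (Suc n)) - S (Suc n)"
      unfolding sum_subtractf sum.distrib sum_distrib_left[symmetric] lvl_sum_butlast
        lvl_sum_children S_def by simp
    moreover have "(\<Sum>y\<in>{y\<in>tree m. length y = Suc n}. - lam * p ^ Suc n * u y)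
       = - lam * p ^ Suc n * S (Suc n)"
      unfolding S_def by (simp add: sum_distrib_left)
    ultimately show ?thesis by (simp add: mult.assoc)
  qed
  have R: "\<beta> * V n + (1 - \<beta>) * V (Suc (Suc n)) - V (Suc n) = - lam * p ^ Suc n * V (Suc n)" for n
  proof -
    define q where "q = (1 / real m) ^ n"
    have V1: "V n = q * S n" "V (Suc n) = q / real m * S (Suc n)"
      "V (Suc (Suc n)) = q / real m / real m * S (Suc (Suc n))"
      by (simp_all add: V_def q_def)
    have "(q / real m) * (\<beta> * real m * S n + ((1 - \<beta>) / real m) * S (Suc (Suc n)) - S (Suc n))
       = (q / real m) * (- lam * p ^ Suc n * S (Suc n))" using RS[of n] by simp
    moreover have "\<beta> * V n + (1 - \<beta>) * V (Suc (Suc n)) - V (Suc n) =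
      (q / real m) * (\<beta> * real m * S n + ((1 - \<beta>) / real m) * S (Suc (Suc n)) - S (Suc n))"
      unfolding V1 using mr by (simp add: field_simps)
    moreover have "(q / real m) * (- lam * p ^ Suc n * S (Suc n)) = - lam * p ^ Suc n * V (Suc n)"
      unfolding V1 by simp
    ultimately show ?thesis by simp
  qed
  have R0: "V 1 = (1 - lam) * V 0"
    using root S0 S1 by (simp add: V_def algebra_simps)
  have Vnn: "V n \<ge> 0" for n
    unfolding V_def S_def by (intro mult_nonneg_nonneg sum_nonneg) (auto intro: u0)
  have Dstep: "(1 - \<beta>) * (V (Suc n) - V (Suc (Suc n))) = \<beta> * (V n - V (Suc n)) + lam * p ^ Suc n * V (Suc n)" for n
    using R[of n] by (simp add: algebra_simps)
  have mon: "V (Suc n) \<le> V n \<and> (V 0 > 0 \<longrightarrow> V (Suc n) < V n)" for n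
  proof (induction n)
    case 0
    have r: "V 1 = V 0 - lam * V 0" using R0 by (simp add: algebra_simps)
    have "lam * V 0 \<ge> 0" using assms(4) Vnn[of 0] by simp
    moreover have "V 0 > 0 \<longrightarrow> lam * V 0 > 0" using assms(4) by simp
    ultimately show ?case using r by simp
  next
    case (Suc n)
    have a: "lam * p ^ Suc n * V (Suc n) \<ge> 0" using assms(4) p0 Vnn
      by (simp add: mult_nonneg_nonneg)
    have b: "\<beta> * (V n - V (Suc n)) \<ge> 0" using Suc assms(2) by simp
    have c: "V 0 > 0 \<longrightarrow> \<beta> * (V n - V (Suc n)) > 0" using Suc assms(2) by simp
    have bb: "1 - \<beta> > 0" using assms(3) by simp
    have "(1 - \<beta>) * (V (Suc n) - V (Suc (Suc n))) \<ge> 0" using Dstep[of n] a b by linarith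
    then have d1: "V (Suc n) - V (Suc (Suc n)) \<ge> 0" using bb by (simp add: zero_le_mult_iff)
    have "V 0 > 0 \<longrightarrow> (1 - \<beta>) * (V (Suc n) - V (Suc (Suc n))) > 0" using Dstep[of n] a c by linarith
    then have "V 0 > 0 \<longrightarrow> V (Suc n) - V (Suc (Suc n)) > 0" using bb by (simp add: zero_less_mult_iff)
    then show ?case using d1 by simp
  qed
  have V0pos: "V 0 > 0"
  proof (rule ccontr)
    assume "\<not> V 0 > 0"
    then have V00: "V 0 = 0" using Vnn[of 0] by simp
    obtain x where x: "x \<in> tree m" "u x \<noteq> 0" using nz by blast
    have "V (length x) \<le> V 0"
      by (rule lift_Suc_antimono_le[of V]) (use mon in auto)
    then have "V (length x) = 0" using V00 Vnn[of "length x"] by simp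
    then have "S (length x) = 0" using mr by (simp add: V_def)
    then have "\<forall>y\<in>{y\<in>tree m. length y = length x}. u y = 0"
      unfolding S_def using sum_nonneg_eq_0_iff[OF lvl_finite] u0 by blast
    then show False using x by auto
  qed
  have Vdec: "V (Suc n) < V n" for n using mon V0pos by blast
  have Vpos: "V n > 0" for n using Vdec[of n] Vnn[of "Suc n"] by linarith
  have Vstrict: "n < n' \<Longrightarrow> V n' < V n" for n n'
    using lift_Suc_mono_less[of "\<lambda>n. - V n" n n'] Vdec by force
  have Vbd: "\<bar>V n\<bar> \<le> C" for n
  proof -
    have "S n \<le> (\<Sum>y\<in>{y\<in>tree m. length y = n}. C)"
      unfolding S_def by (rule sum_mono) (use C in auto)
    also have "\<dots> = real m ^ n * C" by (simp add: lvl_card)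
    finally have "V n \<le> (1 / real m) ^ n * (real m ^ n * C)"
      unfolding V_def by (rule mult_left_mono) simp
    also have "\<dots> = C" using mr by (simp add: power_one_over field_simps)
    finally show ?thesis using Vnn[of n] by simp
  qed
  \<comment> \<open>limit via greedy branch\<close>
  define G where "G = greedy m u"
  define a where "a n = u (G n)" for n
  have Gt: "G n \<in> tree m" "length (G n) = n" for n using greedy_tree[OF m0] by (simp_all add: G_def)
  have "(\<lambda>n. u (G n)) \<longlonglongrightarrow> 0" using br greedy_branch[OF m0, of u] unfolding G_def by blast
  then have alim: "a \<longlonglongrightarrow> 0" by (simp add: a_def[abs_def])
  have Gb: "butlast (G (Suc n)) = G n" for n
    using greedy_prop(1)[OF m0, of u n] by (metis G_def butlast_snoc)
  have Gch: "u (G n @ [j]) \<le> a (Suc n)" if "j < m" for n j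
    using greedy_prop(3)[OF m0, of u n] that by (simp add: a_def G_def)
  have sumch: "(\<Sum>j<m. u (G n @ [j])) \<le> real m * a (Suc n)" for n
  proof -
    have "(\<Sum>j<m. u (G n @ [j])) \<le> (\<Sum>j<m. a (Suc n))" by (rule sum_mono) (simp add: Gch)
    then show ?thesis by simp
  qed
  have Ra: "\<beta> * a n + (1 - \<beta>) * a (Suc (Suc n)) - a (Suc n) \<ge> - lam * p ^ Suc n * a (Suc n)" for n
  proof -
    have ne: "G (Suc n) \<noteq> []" using Gt(2)[of "Suc n"] by auto
    have l: "\<beta> * a n + ((1 - \<beta>) / real m) * (\<Sum>i<m. u (G (Suc n) @ [i])) - a (Suc n)
       = - lam * p ^ Suc n * a (Suc n)"
      using loc[OF Gt(1) ne] Gb Gt(2) by (simp add: a_def)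
    have "((1 - \<beta>) / real m) * (\<Sum>i<m. u (G (Suc n) @ [i])) \<le> ((1 - \<beta>) / real m) * (real m * a (Suc (Suc n)))"
      by (rule mult_left_mono[OF sumch]) (use assms(3) in simp)
    also have "\<dots> = (1 - \<beta>) * a (Suc (Suc n))" using mr by simp
    finally show ?thesis using l by linarith
  qed
  have a0: "a 0 = V 0" using S0 by (simp add: a_def G_def V_def)
  have a1: "a 1 \<ge> V 1"
  proof -
    have "(\<Sum>j<m. u [j]) \<le> real m * a 1" using sumch[of 0] by (simp add: G_def)
    then have "(1 / real m) * (\<Sum>j<m. u [j]) \<le> a 1" using mr by (simp add: field_simps)
    then show ?thesis using root R0 a0 S0 by (simp add: V_def algebra_simps)
  qed
  define e where "e n = a n - V n" for n
  have Re: "(1 - \<beta>) * e (Suc (Suc n)) \<ge> (1 - lam * p ^ Suc n) * e (Suc n) - \<beta> * e n" for n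
    using Ra[of n] R[of n] unfolding e_def by (simp add: algebra_simps)
  have RV: "(1 - \<beta>) * V (Suc (Suc n)) = (1 - lam * p ^ Suc n) * V (Suc n) - \<beta> * V n" for n
    using R[of n] by (simp add: algebra_simps)
  define K where "K n = e (Suc n) * V n - e n * V (Suc n)" for n
  have Kstep: "(1 - \<beta>) * K (Suc n) \<ge> \<beta> * K n" for n
  proof -
    have "(1 - \<beta>) * K (Suc n) = ((1 - \<beta>) * e (Suc (Suc n))) * V (Suc n) - e (Suc n) * ((1 - \<beta>) * V (Suc (Suc n)))"
      by (simp add: K_def algebra_simps)
    also have "\<dots> \<ge> ((1 - lam * p ^ Suc n) * e (Suc n) - \<beta> * e n) * V (Suc n) - e (Suc n) * ((1 - \<beta>) * V (Suc (Suc n)))"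
      using mult_right_mono[OF Re[of n] Vnn[of "Suc n"]] by linarith
    finally show ?thesis unfolding RV by (simp add: K_def algebra_simps)
  qed
  have Knn: "K n \<ge> 0" for n
  proof (induction n)
    case 0 then show ?case using a0 a1 Vnn[of 0] by (simp add: K_def e_def)
  next
    case (Suc n)
    have "\<beta> * K n \<ge> 0" using Suc assms(2) by simp
    then have "(1 - \<beta>) * K (Suc n) \<ge> 0" using Kstep[of n] by linarith
    then show ?case using assms(3) by (simp add: zero_le_mult_iff)
  qed
  have enn: "e n \<ge> 0" for n
  proof (induction n)
    case 0 then show ?case using a0 by (simp add: e_def)
  next
    case (Suc n)
    have "e (Suc n) * V n \<ge> e n * V (Suc n)" using Knn[of n] by (simp add: K_def)
    moreover have "e n * V (Suc n) \<ge> 0" using Suc Vnn by simp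
    ultimately have "e (Suc n) * V n \<ge> 0" by linarith
    then show ?case using Vpos[of n] by (simp add: zero_le_mult_iff)
  qed
  have Vlim: "V \<longlonglongrightarrow> 0"
  proof (rule tendsto_sandwich[of "\<lambda>_. 0" V sequentially a])
    show "\<forall>\<^sub>F n in sequentially. 0 \<le> V n" using Vnn by simp
    show "\<forall>\<^sub>F n in sequentially. V n \<le> a n" using enn by (simp add: e_def)
  qed (simp_all add: alim)
  have ef: "eigenfunction m \<beta> lam (level_avg m u)"
    unfolding eigenfunction_def
  proof (intro conjI)
    show "\<exists>C. \<forall>x\<in>tree m. \<bar>level_avg m u x\<bar> \<le> C" using Vbd by (auto simp: hav)
    show "\<exists>x\<in>tree m. level_avg m u x \<noteq> 0"
      using V0pos by (intro bexI[of _ "[]"]) (auto simp: hav tree_def)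
    show "\<forall>x\<in>tree m. - Delta m \<beta> (level_avg m u) x = lam * level_avg m u x"
    proof
      fix x assume x: "x \<in> tree m"
      show "- Delta m \<beta> (level_avg m u) x = lam * level_avg m u x"
      proof (cases "x = []")
        case True
        then show ?thesis using R0 mr by (simp add: Delta_def hav algebra_simps)
      next
        case False
        then obtain k where k: "length x = Suc k" by (cases x) auto
        have "Delta m \<beta> (level_avg m u) x =
           (\<beta> * V k + (1 - \<beta>) * V (Suc (Suc k)) - V (Suc k)) * (inverse p) ^ Suc k"
          using False k mr by (simp add: Delta_def hav p_def)
        also have "\<dots> = - lam * V (Suc k) * (p ^ Suc k * (inverse p) ^ Suc k)"
          unfolding R by (simp add: algebra_simps)
        also have "p ^ Suc k * (inverse p) ^ Suc k = 1"
          using p0 by (simp only: power_mult_distrib[symmetric]) simp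
        finally have "Delta m \<beta> (level_avg m u) x = - lam * V (Suc k)" by simp
        moreover have "level_avg m u x = V (Suc k)" using k hav[of x] by simp
        ultimately show ?thesis by simp
      qed
    qed
    show "\<forall>X. branch m X \<longrightarrow> (\<lambda>n. level_avg m u (X n)) \<longlonglongrightarrow> 0"
    proof (intro allI impI)
      fix X assume "branch m X"
      then have "length (X n) = n" for n
      proof (induction n)
        case (Suc n)
        obtain i where "X (Suc n) = X n @ [i]" using \<open>branch m X\<close> unfolding branch_def by blast
        then show ?case using Suc by simp
      qed (use \<open>branch m X\<close> in \<open>simp add: branch_def\<close>)
      then show "(\<lambda>n. level_avg m u (X n)) \<longlonglongrightarrow> 0" using Vlim by (simp add: hav)
    qed
  qed
  show ?thesis
    using ef Vpos Vstrict by (auto simp: hav)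
qed

end
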